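(* Assume CH. There exists a Sierpiński set $S\subseteq\mathbb{R}$ such that $S+S=\{a+b:a,b\in S\}$ is a Bernstein set.
   Context: A Sierpiński set is $S\subseteq\mathbb{R}$ with $|S|=\mathfrak{c}$ such that $S\cap N$ is countable for every Lebesgue-null $N\subseteq\mathbb{R}$. A set $B\subseteq\mathbb{R}$ is a Bernstein set if for every nonempty perfect set $P\subseteq\mathbb{R}$ both $B\cap P\neq\emptyset$ and $(\mathbb{R}\setminus B)\cap P\neq\emptyset$. *)

theory Defs
  imports "HOL-Analysis.Analysis" "HOL-Library.Equipollence"
begin

definition CH :: bool where
  "CH \<longleftrightarrow> (\<forall>A :: real set. uncountable A \<longrightarrow> A \<approx> (UNIV :: real set))"

definition perfect_set :: "real set \<Rightarrow> bool" where
  "perfect_set P \<longleftrightarrow> closed P \<and> (\<forall>x\<in>P. x islimpt P)"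

definition sierpinski_set :: "real set \<Rightarrow> bool" where
  "sierpinski_set S \<longleftrightarrow> S \<approx> (UNIV :: real set) \<and>
     (\<forall>N \<in> null_sets lebesgue. countable (S \<inter> N))"

definition bernstein_set :: "real set \<Rightarrow> bool" where
  "bernstein_set B \<longleftrightarrow> (\<forall>P. perfect_set P \<and> P \<noteq> {} \<longrightarrow>
     B \<inter> P \<noteq> {} \<and> (UNIV - B) \<inter> P \<noteq> {})"

end

theory Submission
  imports Defs
begin

unbundle cardinal_syntax

lemma CH_wo:
  assumes "CH"
  shows "\<exists>R::(real\<times>real) set. wf R \<and> trans R \<and> (\<forall>a b. a \<noteq> b \<longrightarrow> (a,b)\<in>R \<or> (b,a)\<in>R)
      \<and> (\<forall>a. countable {b. (b,a)\<in>R})"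
proof -
  let ?r = "|UNIV::real set|"
  have WO: "Well_order ?r" by (rule card_of_Well_order)
  have F: "Field ?r = UNIV" by (rule Field_card_of)
  define R where "R = ?r - Id"
  have "wf R" unfolding R_def using WO wo_rel.WF wo_rel_def by blast
  moreover have "trans R"
  proof (rule transI)
    fix x y z assume "(x,y)\<in>R" "(y,z)\<in>R"
    then show "(x,z)\<in>R" using WO unfolding R_def
      by (metis DiffE DiffI IdD IdI antisymD order_on_defs(1,2,3) trans_def well_order_on_def)
  qed
  moreover have "\<forall>a b. a \<noteq> b \<longrightarrow> (a,b)\<in>R \<or> (b,a)\<in>R"
    using WO F unfolding R_def
    by (metis DiffI IdD UNIV_I total_on_def well_order_on_def linear_order_on_def)
  moreover have "countable {b. (b,a)\<in>R}" for a
  proof (rule ccontr)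
    assume u: "uncountable {b. (b,a)\<in>R}"
    have eq: "{b. (b,a)\<in>R} = underS ?r a" unfolding R_def underS_def by auto
    have "|underS ?r a| <o ?r" using card_of_underS[OF card_of_Card_order, of a "UNIV::real set"] F by simp
    moreover have "underS ?r a \<approx> (UNIV::real set)" using assms u eq unfolding CH_def by auto
    ultimately show False using eqpoll_iff_card_of_ordIso not_ordLess_ordIso by blast
  qed
  ultimately show ?thesis by blast
qed


definition ssum :: "real set \<Rightarrow> real set" where
  "ssum A = {a + b | a b. a \<in> A \<and> b \<in> A}"

lemma countable_sums: "countable A \<Longrightarrow> countable (ssum A)"
proof -
  assume "countable A"
  then have "countable ((\<lambda>(a,b). a + b) ` (A \<times> A))" by auto
  moreover have "ssum A = (\<lambda>(a,b). a + b) ` (A \<times> A)" unfolding ssum_def by auto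
  ultimately show ?thesis by simp
qed

lemma countable_negligible: "countable (S::real set) \<Longrightarrow> negligible S"
proof -
  assume "countable S"
  then have "negligible (\<Union>((\<lambda>x. {x}) ` S))"
    by (intro negligible_countable_Union) auto
  then show ?thesis by simp
qed

lemma negligible_reflect: "negligible (S::real set) \<Longrightarrow> negligible ((\<lambda>x. p - x) ` S)"
  by (rule negligible_differentiable_image_negligible) (auto intro!: derivative_intros)

locale cons =
  fixes R :: "(real \<times> real) set" and N P :: "real \<Rightarrow> real set"
  assumes wfR: "wf R" and trR: "trans R" and totR: "\<And>a b. a \<noteq> b \<Longrightarrow> (a,b)\<in>R \<or> (b,a)\<in>R"
    and cntR: "\<And>a. countable {b. (b,a)\<in>R}"
    and neglN: "\<And>a. negligible (N a)" and uncP: "\<And>a. uncountable (P a)"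
begin

definition pred where "pred a = {b. (b,a)\<in>R}"

definition Aof :: "(real \<Rightarrow> real\<times>real\<times>real) \<Rightarrow> real \<Rightarrow> real set" where
  "Aof f a = (\<lambda>b. fst (f b)) ` pred a \<union> (\<lambda>b. fst (snd (f b))) ` pred a"
definition Dof :: "(real \<Rightarrow> real\<times>real\<times>real) \<Rightarrow> real \<Rightarrow> real set" where
  "Dof f a = (\<lambda>b. snd (snd (f b))) ` pred a"
definition Nu where "Nu a = \<Union>(N ` insert a (pred a))"
definition dch where "dch f a = (SOME d. d \<in> P a \<and> d \<notin> ssum (Aof f a))"
definition pch where "pch f a = (SOME p. p \<in> P a \<and> p \<notin> insert (dch f a) (Dof f a))"
definition Bad where "Bad A D p a = Nu a \<union> (\<lambda>x. p - x) ` Nu a \<union> A \<union>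
   (\<lambda>(e,x). e - x) ` (D \<times> A) \<union> (\<lambda>(e,x). p + x - e) ` (D \<times> A) \<union>
   (\<lambda>e. e/2) ` D \<union> (\<lambda>e. p - e/2) ` D"
definition sch where "sch f a = (SOME s. s \<notin> Bad (Aof f a) (insert (dch f a) (Dof f a)) (pch f a) a)"
definition H where "H f a = (sch f a, pch f a - sch f a, dch f a)"
definition F where "F = wfrec R H"

lemma H_cong: "(\<And>b. b \<in> pred a \<Longrightarrow> f b = g b) \<Longrightarrow> H f a = H g a"
proof -
  assume e: "\<And>b. b \<in> pred a \<Longrightarrow> f b = g b"
  have "Aof f a = Aof g a" "Dof f a = Dof g a" unfolding Aof_def Dof_def using e by (auto simp: image_iff)
  then show ?thesis unfolding H_def sch_def pch_def dch_def by simp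
qed

lemma F_eq: "F a = H F a"
proof -
  have "F a = H (cut F R a) a" unfolding F_def by (rule wfrec[OF wfR])
  also have "\<dots> = H F a" by (rule H_cong) (simp add: pred_def cut_apply)
  finally show ?thesis .
qed

lemma cnt_pred: "countable (pred a)" using cntR unfolding pred_def by simp

lemma cnt_A: "countable (Aof f a)" unfolding Aof_def using cnt_pred by auto
lemma cnt_D: "countable (Dof f a)" unfolding Dof_def using cnt_pred by auto

lemma dch: "dch f a \<in> P a \<and> dch f a \<notin> ssum (Aof f a)"
proof -
  have "countable (ssum (Aof f a))" using countable_sums cnt_A by blast
  then have "\<exists>d. d \<in> P a \<and> d \<notin> ssum (Aof f a)"
    using uncP[of a] by (metis countable_subset subsetI)
  then show ?thesis unfolding dch_def by (rule someI_ex)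
qed

lemma pch: "pch f a \<in> P a \<and> pch f a \<notin> insert (dch f a) (Dof f a)"
proof -
  have "countable (insert (dch f a) (Dof f a))" using cnt_D by blast
  then have "\<exists>d. d \<in> P a \<and> d \<notin> insert (dch f a) (Dof f a)"
    using uncP[of a] by (metis countable_subset subsetI)
  then show ?thesis unfolding pch_def by (rule someI_ex)
qed

lemma negl_Nu: "negligible (Nu a)"
  unfolding Nu_def using cnt_pred neglN by (intro negligible_countable_Union) auto

lemma negl_Bad: "countable A \<Longrightarrow> countable D \<Longrightarrow> negligible (Bad A D p a)"
proof -
  assume A: "countable A" and D: "countable D"
  have c1: "countable ((\<lambda>(e,x). e - x) ` (D \<times> A))" using A D by simp
  have c2: "countable ((\<lambda>(e,x). p + x - e) ` (D \<times> A))" using A D by simp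
  have n1: "negligible ((\<lambda>e. e/2) ` D)" "negligible ((\<lambda>e. p - e/2) ` D)"
    by (rule countable_negligible, rule countable_image, rule D)+
  note n2 = negl_Nu[of a] negligible_reflect[OF negl_Nu, of p a] countable_negligible[OF A]
      countable_negligible[OF c1] countable_negligible[OF c2]
  show ?thesis unfolding Bad_def
    apply (intro negligible_Un)
    apply (fact n2(1))
    apply (fact n2(2))
    apply (fact n2(3))
    apply (fact n2(4))
    apply (fact n2(5))
    apply (fact n1(1))
    apply (fact n1(2))
    done
qed

lemma sch: "sch f a \<notin> Bad (Aof f a) (insert (dch f a) (Dof f a)) (pch f a) a"
proof -
  have ng: "negligible (Bad (Aof f a) (insert (dch f a) (Dof f a)) (pch f a) a)"
    by (rule negl_Bad[OF cnt_A countable_insert[OF cnt_D]])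
  have "\<exists>s. s \<notin> Bad (Aof f a) (insert (dch f a) (Dof f a)) (pch f a) a"
  proof (rule ccontr)
    assume "\<nexists>s. s \<notin> Bad (Aof f a) (insert (dch f a) (Dof f a)) (pch f a) a"
    then have "Bad (Aof f a) (insert (dch f a) (Dof f a)) (pch f a) a = UNIV" by blast
    with ng show False by simp
  qed
  then show ?thesis unfolding sch_def by (rule someI_ex)
qed

definition s where "s a = fst (F a)"
definition t where "t a = fst (snd (F a))"
definition d where "d a = snd (snd (F a))"
definition p where "p a = pch F a"

lemma s_eq: "s a = sch F a" and t_eq: "t a = p a - s a" and d_eq: "d a = dch F a"
  unfolding s_def t_def d_def p_def by (subst F_eq, simp add: H_def)+

lemma A_eq: "Aof F a = s ` pred a \<union> t ` pred a"
  unfolding Aof_def s_def t_def by simp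
lemma D_eq: "Dof F a = d ` pred a"
  unfolding Dof_def d_def by simp

lemma sB: "s a \<notin> Bad (Aof F a) (insert (d a) (Dof F a)) (p a) a"
  using sch[of F a] unfolding s_eq d_eq p_def .

lemma s_notin_A: "s a \<notin> Aof F a" using sB[of a] unfolding Bad_def by blast

lemma s_Nu: "s a \<notin> Nu a" "t a \<notin> Nu a"
proof -
  show "s a \<notin> Nu a" using sB[of a] unfolding Bad_def by blast
  show "t a \<notin> Nu a"
  proof
    assume "t a \<in> Nu a"
    then have "s a \<in> (\<lambda>x. p a - x) ` Nu a" unfolding t_eq by (intro image_eqI[of _ _ "p a - s a"]) auto
    then show False using sB[of a] unfolding Bad_def by blast
  qed
qed

lemma p_eq: "s a + t a = p a" unfolding t_eq by simp

lemma new_sum: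
  assumes x: "x \<in> {s a, t a}" and y: "y \<in> Aof F a \<union> {s a, t a}" and e: "e \<in> insert (d a) (Dof F a)"
  shows "x + y \<noteq> e"
proof
  assume xy: "x + y = e"
  let ?D = "insert (d a) (Dof F a)" and ?A = "Aof F a"
  have B: "s a \<notin> (\<lambda>(e,x). e - x) ` (?D \<times> ?A)" "s a \<notin> (\<lambda>(e,x). p a + x - e) ` (?D \<times> ?A)"
      "s a \<notin> (\<lambda>e. e/2) ` ?D" "s a \<notin> (\<lambda>e. p a - e/2) ` ?D"
    using sB[of a] unfolding Bad_def by blast+
  have pD: "p a \<notin> ?D" using pch[of F a] unfolding p_def d_eq by blast
  consider "x = s a" "y \<in> ?A" | "x = t a" "y \<in> ?A" | "x = s a" "y = s a" | "x = t a" "y = t a"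
    | "x = s a" "y = t a" | "x = t a" "y = s a" using x y by blast
  then show False
  proof cases
    case 1
    then have "s a = (\<lambda>(e,x). e - x) (e, y)" using xy by simp
    then show False using B(1) e 1 by blast
  next
    case 2
    then have "s a = (\<lambda>(e,x). p a + x - e) (e, y)" using xy t_eq[of a] by simp
    then show False using B(2) e 2 by blast
  next
    case 3
    then have "s a = e/2" using xy by simp
    then show False using B(3) e by blast
  next
    case 4
    then have "s a = p a - e/2" using xy t_eq[of a] by simp
    then show False using B(4) e by blast
  next
    case 5
    then have "p a = e" using xy p_eq[of a] by simp
    then show False using pD e by blast
  next
    case 6
    then have "p a = e" using xy p_eq[of a] by (simp add: add.commute)
    then show False using pD e by blast
  qed
qed

lemma in_A: "x \<in> {s b, t b} \<Longrightarrow> b \<in> pred c \<Longrightarrow> x \<in> Aof F c"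
  unfolding A_eq by blast

lemma key:
  assumes x: "x \<in> {s b1, t b1}" and y: "y \<in> {s b2, t b2}" and le: "b2 = b1 \<or> (b2,b1) \<in> R"
  shows "x + y \<noteq> d c"
proof (cases "c = b1 \<or> (c,b1) \<in> R")
  case True
  have "y \<in> Aof F b1 \<union> {s b1, t b1}" using le y in_A[of y b2 b1] by (auto simp: pred_def)
  moreover have "d c \<in> insert (d b1) (Dof F b1)" using True unfolding D_eq pred_def by auto
  ultimately show ?thesis using new_sum[OF x] by blast
next
  case False
  then have "(b1,c) \<in> R" using totR by blast
  moreover then have "b2 = b1 \<or> (b2, c) \<in> R" using le trR by (meson transD)
  ultimately have "x \<in> Aof F c" "y \<in> Aof F c" using in_A x y by (auto simp: pred_def)
  then have "x + y \<in> ssum (Aof F c)" unfolding ssum_def by blast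
  then show ?thesis using dch[of F c] unfolding d_eq by auto
qed

theorem main: "\<exists>S. uncountable S \<and> (\<forall>a. countable (S \<inter> N a)) \<and>
   (\<forall>a. ssum S \<inter> P a \<noteq> {} \<and> P a - ssum S \<noteq> {})"
proof (intro exI conjI allI)
  let ?S = "range s \<union> range t"
  have "inj s"
  proof (rule injI)
    fix a b assume e: "s a = s b"
    show "a = b"
    proof (rule ccontr)
      assume "a \<noteq> b"
      then consider "(a,b) \<in> R" | "(b,a) \<in> R" using totR by blast
      then show False
      proof cases
        case 1 then have "s a \<in> Aof F b" by (intro in_A[of _ a]) (auto simp: pred_def)
        then show False using s_notin_A[of b] e by simp
      next
        case 2 then have "s b \<in> Aof F a" by (intro in_A[of _ b]) (auto simp: pred_def)
        then show False using s_notin_A[of a] e by simp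
      qed
    qed
  qed
  then have "uncountable (range s)"
    using countable_image_inj_on[of s UNIV] uncountable_UNIV_real by blast
  then show "uncountable ?S" using countable_subset[of "range s" ?S] by blast
next
  fix a
  let ?S = "range s \<union> range t"
  have "?S \<inter> N a \<subseteq> s ` pred a \<union> t ` pred a"
  proof
    fix x assume xS: "x \<in> ?S \<inter> N a"
    then obtain g where g: "x = s g \<or> x = t g" by auto
    show "x \<in> s ` pred a \<union> t ` pred a"
    proof (cases "g \<in> pred a")
      case True then show ?thesis using g by blast
    next
      case False
      then have "a \<in> insert g (pred g)" using totR[of g a] unfolding pred_def by auto
      then have "N a \<subseteq> Nu g" unfolding Nu_def by blast
      then show ?thesis using s_Nu[of g] g xS by blast
    qed
  qed
  moreover have "countable (s ` pred a \<union> t ` pred a)" using cnt_pred by simp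
  ultimately show "countable (?S \<inter> N a)" by (rule countable_subset)
next
  fix a
  let ?S = "range s \<union> range t"
  have "\<exists>x y. p a = x + y \<and> x \<in> ?S \<and> y \<in> ?S" by (intro exI[of _ "s a"] exI[of _ "t a"]) (simp add: p_eq)
  then have "p a \<in> ssum ?S" unfolding ssum_def by blast
  moreover have "p a \<in> P a" using pch[of F a] unfolding p_def by blast
  ultimately show "ssum ?S \<inter> P a \<noteq> {}" by blast
  have "d a \<notin> ssum ?S"
  proof
    assume "d a \<in> ssum ?S"
    then have "\<exists>x y. d a = x + y \<and> x \<in> ?S \<and> y \<in> ?S" unfolding ssum_def mem_Collect_eq .
    then obtain x y where xy0: "d a = x + y" and xS: "x \<in> ?S" and yS: "y \<in> ?S"
      by (elim exE conjE) (rule that)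
    have xy: "x + y = d a" using xy0 by simp
    from xS obtain b1 where x: "x \<in> {s b1, t b1}" by auto
    from yS obtain b2 where y: "y \<in> {s b2, t b2}" by auto
    consider "b2 = b1 \<or> (b2,b1) \<in> R" | "b1 = b2 \<or> (b1,b2) \<in> R" using totR[of b1 b2] by auto
    then show False
    proof cases
      case 1 then show False using key[OF x y] xy by blast
    next
      case 2
      have "y + x \<noteq> d a" by (rule key[OF y x 2])
      then show False using xy by (simp add: add.commute)
    qed
  qed
  moreover have "d a \<in> P a" using dch[of F a] unfolding d_eq by blast
  ultimately show "P a - ssum ?S \<noteq> {}" by blast
qed

end


lemma code_surj: "\<exists>g::real \<Rightarrow> (nat \<Rightarrow> nat set). surj g"
proof -
  define \<phi> :: "(nat \<Rightarrow> nat set) \<Rightarrow> nat set" where "\<phi> c = prod_encode ` (SIGMA n:UNIV. c n)" for c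
  have inj\<phi>: "inj \<phi>"
  proof (rule injI)
    fix c c' assume e: "\<phi> c = \<phi> c'"
    have "c n = {k. prod_encode (n,k) \<in> \<phi> c}" for c n unfolding \<phi>_def by auto
    then show "c = c'" using e by (metis ext)
  qed
  obtain h :: "nat set \<Rightarrow> real" where h: "bij_betw h UNIV UNIV"
    using nat_sets_eqpoll_reals unfolding eqpoll_def by blast
  have "inj (h \<circ> \<phi>)" using inj\<phi> h by (simp add: bij_betw_def inj_compose)
  then have "surj (inv (h \<circ> \<phi>))" by (metis inv_f_f surjI)
  then show ?thesis by blast
qed

lemma neg_cover:
  fixes M :: "real set"
  assumes M: "negligible M"
  shows "\<exists>U::nat \<Rightarrow> real set. (\<forall>n. open (U n) \<and> M \<subseteq> U n) \<and> negligible (\<Inter>n. U n)"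
proof -
  have "\<exists>T. open T \<and> M \<subseteq> T \<and> (T - M) \<in> lmeasurable \<and> measure lebesgue (T - M) < inverse (real (Suc n))" for n
  proof -
    have "(0::real) < inverse (real (Suc n))" by simp
    from sets_lebesgue_outer_open[OF negligible_imp_sets[OF M] this]
    obtain T where T: "open T" "M \<subseteq> T" "(T - M) \<in> lmeasurable"
       "emeasure lebesgue (T - M) < ennreal (inverse (real (Suc n)))" by blast
    have "ennreal (measure lebesgue (T - M)) < ennreal (inverse (real (Suc n)))"
      using T(4) emeasure_eq_measure2[OF T(3)] by simp
    then have "measure lebesgue (T - M) < inverse (real (Suc n))"
      by (simp add: ennreal_less_iff)
    then show ?thesis using T by blast
  qed
  then obtain U where U: "\<And>n. open (U n) \<and> M \<subseteq> U n \<and> (U n - M) \<in> lmeasurable \<and>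
     measure lebesgue (U n - M) < inverse (real (Suc n))" by metis
  have "negligible (\<Inter>n. U n)"
    unfolding negligible_outer
  proof (intro allI impI)
    fix e :: real assume "0 < e"
    then obtain n where n: "inverse (real (Suc n)) < e" using reals_Archimedean by blast
    let ?T = "(U n - M) \<union> M"
    have Mm: "M \<in> lmeasurable" using negligible_imp_measurable[OF M] .
    have Tm: "?T \<in> lmeasurable" by (rule fmeasurable.Un) (use U[of n] Mm in auto)
    have "measure lebesgue ?T \<le> measure lebesgue (U n - M) + measure lebesgue M"
      by (rule measure_Un_le) (use U[of n] Mm in auto)
    also have "\<dots> = measure lebesgue (U n - M)" using negligible_imp_measure0[OF M] by simp
    finally have "measure lebesgue ?T < e" using U[of n] n by linarith
    moreover have "(\<Inter>n. U n) \<subseteq> ?T" by blast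
    ultimately show "\<exists>T. (\<Inter>n. U n) \<subseteq> T \<and> T \<in> lmeasurable \<and> measure lebesgue T < e"
      using Tm by blast
  qed
  then show ?thesis using U by blast
qed

lemma perfect_uncountable:
  assumes "perfect_set P" "P \<noteq> {}"
  shows "uncountable P"
proof
  assume c: "countable P"
  have cl: "closed P" using assms(1) unfolding perfect_set_def by (rule conjunct1)
  have lp: "\<And>x. x \<in> P \<Longrightarrow> x islimpt P" using assms(1) unfolding perfect_set_def by (simp only:)
  let ?G = "(\<lambda>x. P - {x}) ` P"
  have "P \<subseteq> closure (\<Inter>?G)"
  proof (rule Baire[OF cl])
    show "countable ?G" by (rule countable_image[OF c])
    fix T assume "T \<in> ?G"
    then obtain x where x: "x \<in> P" "T = P - {x}" by (rule imageE) simp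
    have o: "open (- {x})" by (rule open_Compl[OF closed_singleton])
    have e: "P - {x} = P \<inter> - {x}" by (simp only: Diff_eq)
    have "openin (top_of_set P) (P - {x})"
      unfolding openin_open using o e by (intro exI[of _ "-{x}"] conjI)
    moreover have "P \<subseteq> closure (P - {x})"
    proof (rule subsetI)
      fix y assume y: "y \<in> P"
      show "y \<in> closure (P - {x})"
      proof (cases "y = x")
        case True
        have "x \<in> closure (P - {x})" using iffD1[OF islimpt_in_closure lp[OF x(1)]] .
        then show ?thesis using True by (simp only:)
      next
        case False
        then have "y \<in> P - {x}" using y by (simp only: Diff_iff singleton_iff not_False_eq_True simp_thms)
        with closure_subset[of "P - {x}"] show ?thesis by (rule subsetD)
      qed
    qed
    ultimately show "openin (top_of_set P) T \<and> P \<subseteq> closure T" using x(2) by (simp only: simp_thms)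
  qed
  moreover have "\<Inter>?G = {}"
  proof (rule equals0I)
    fix y assume y: "y \<in> \<Inter>?G"
    obtain x0 where x0: "x0 \<in> P" using assms(2) by (metis ex_in_conv)
    have "P - {x0} \<in> ?G" using x0 by (rule imageI)
    then have "y \<in> P - {x0}" using y by (rule InterD[rotated])
    then have yP: "y \<in> P" by (rule DiffD1)
    have "P - {y} \<in> ?G" using yP by (rule imageI)
    then have "y \<in> P - {y}" using y by (rule InterD[rotated])
    then show False by (simp only: Diff_iff singleton_iff simp_thms)
  qed
  ultimately have "P \<subseteq> {}" by (simp only: closure_empty)
  then show False using assms(2) by (simp only: subset_empty)
qed



theorem mainTheorem18:
  assumes "CH"
  shows "\<exists>S. sierpinski_set S \<and> bernstein_set {a + b | a b. a \<in> S \<and> b \<in> S}"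
proof -
  obtain R :: "(real \<times> real) set" where R: "wf R" "trans R" "\<And>a b. a \<noteq> b \<Longrightarrow> (a,b)\<in>R \<or> (b,a)\<in>R"
    "\<And>a. countable {b. (b,a)\<in>R}" using CH_wo[OF assms] by blast
  obtain g :: "real \<Rightarrow> (nat \<Rightarrow> nat set)" where g: "surj g" using code_surj by blast
  obtain B :: "nat \<Rightarrow> real set" where B0: "inj B" and B: "\<And>n. open (B n)" "\<And>S. open S \<Longrightarrow> \<exists>k. S = \<Union>{B n |n. n \<in> k}"
    by (rule univ_second_countable_sequence) (rule that)
  define op where "op k = \<Union>{B n |n. n \<in> k}" for k
  define Nc where "Nc a = (if negligible (\<Inter>n. op (g a n)) then (\<Inter>n. op (g a n)) else {})" for a
  define Pc where "Pc a = (if uncountable (- op (g a 0)) then - op (g a 0) else UNIV)" for a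
  have "cons R Nc Pc"
  proof
    show "wf R" "trans R" by (fact R(1), fact R(2))
    show "\<And>a b. a \<noteq> b \<Longrightarrow> (a,b)\<in>R \<or> (b,a)\<in>R" by (fact R(3))
    show "\<And>a. countable {b. (b,a)\<in>R}" by (fact R(4))
    show "\<And>a. negligible (Nc a)" unfolding Nc_def by simp
    show "\<And>a. uncountable (Pc a)" unfolding Pc_def using uncountable_UNIV_real by simp
  qed
  then have "\<exists>S. uncountable S \<and> (\<forall>a. countable (S \<inter> Nc a)) \<and>
   (\<forall>a. ssum S \<inter> Pc a \<noteq> {} \<and> Pc a - ssum S \<noteq> {})" by (rule cons.main)
  then obtain S where S1: "uncountable S" and S2: "\<forall>a. countable (S \<inter> Nc a)"
    and S3: "\<forall>a. ssum S \<inter> Pc a \<noteq> {} \<and> Pc a - ssum S \<noteq> {}"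
    by (elim exE conjE) (rule that)
  note S = S1 S2[rule_format] conjunct1[OF S3[rule_format]] conjunct2[OF S3[rule_format]]
  have ss: "{a + b | a b. a \<in> S \<and> b \<in> S} = ssum S" unfolding ssum_def by (rule refl)
  have "sierpinski_set S"
    unfolding sierpinski_set_def
  proof (intro conjI ballI)
    show "S \<approx> (UNIV::real set)" by (rule assms[unfolded CH_def, rule_format, OF S(1)])
    fix M :: "real set" assume "M \<in> null_sets lebesgue"
    then have M: "negligible M" by (simp add: negligible_iff_null_sets)
    from neg_cover[OF M] obtain U :: "nat \<Rightarrow> real set" where U0: "(\<forall>n. open (U n) \<and> M \<subseteq> U n) \<and> negligible (\<Inter>n. U n)"
      by (elim exE) (erule that)
    have U1: "open (U n)" "M \<subseteq> U n" for n using conjunct1[OF U0] by simp_all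
    have U2: "negligible (\<Inter>n. U n)" using conjunct2[OF U0] .
    have "\<forall>n. \<exists>k. U n = op k"
    proof
      fix n show "\<exists>k. U n = op k" unfolding op_def by (rule B(2)[OF U1(1)])
    qed
    then have "\<exists>k. \<forall>n. U n = op (k n)" by (rule choice)
    then obtain k where k: "\<forall>n. U n = op (k n)" by (elim exE) (erule that)
    from surjD[OF g, of k] obtain a where a: "k = g a" by (elim exE) (erule that)
    have "(\<Inter>n. op (g a n)) = (\<Inter>n. U n)" using a k by simp
    then have Na: "Nc a = (\<Inter>n. U n)" unfolding Nc_def using U2 by simp
    have "M \<subseteq> (\<Inter>n. U n)"
    proof (rule subsetI)
      fix x assume "x \<in> M" then show "x \<in> (\<Inter>n. U n)" using U1(2) by auto
    qed
    then have "S \<inter> M \<subseteq> S \<inter> Nc a" unfolding Na by (rule Int_mono[OF subset_refl])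
    then show "countable (S \<inter> M)" using S(2)[of a] by (rule countable_subset)
  qed
  moreover have "bernstein_set (ssum S)"
    unfolding bernstein_set_def
  proof (intro allI impI)
    fix Q :: "real set" assume Q: "perfect_set Q \<and> Q \<noteq> {}"
    have "closed Q" using conjunct1[OF Q] unfolding perfect_set_def by (rule conjunct1)
    then have "open (- Q)" by (rule open_Compl)
    from B(2)[OF this] obtain k0 where "- Q = \<Union>{B n |n. n \<in> k0}" by (elim exE) (erule that)
    then have k0: "- Q = op k0" unfolding op_def .
    from surjD[OF g, of "\<lambda>n. k0"] obtain a where a: "(\<lambda>n. k0) = g a" by (elim exE) (erule that)
    have uQ: "uncountable Q" by (rule perfect_uncountable[OF conjunct1[OF Q] conjunct2[OF Q]])
    have "g a 0 = k0" using a by (metis)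
    then have "- op (g a 0) = Q" using k0[symmetric] by simp
    then have Pa: "Pc a = Q" unfolding Pc_def using uQ by simp
    have "(UNIV - ssum S) \<inter> Q = Pc a - ssum S" unfolding Pa by auto
    then show "ssum S \<inter> Q \<noteq> {} \<and> (UNIV - ssum S) \<inter> Q \<noteq> {}"
      using S(3)[of a] S(4)[of a] unfolding Pa by simp
  qed
  ultimately have "sierpinski_set S \<and> bernstein_set {a + b | a b. a \<in> S \<and> b \<in> S}"
    unfolding ss by (rule conjI)
  then show ?thesis by (rule exI)
qed

end
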